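(* Let $(M,S)$ be a covered map with $\Delta(M,S)=(M,(I,O))$. Then $\Delta(M^*,\bar S)=(M^*,(O,I))$, where $\bar S=H\setminus S$; that is, the oriented map associated with the dual covered map is the dual oriented map.
   Context: Permutations compose right to left. A map is $M=(H,\sigma,\alpha)$ with $H$ finite, $\alpha$ a fixed-point-free involution, $\sigma$ a permutation, $\langle\sigma,\alpha\rangle$ transitive, root $r\in H$; $\phi=\sigma\alpha$. The dual map is $M^*=(H,\phi,\alpha)$ with the same root. For $S\subseteq H$, $\pi_{|S}$ is obtained from the cycles of $\pi$ by erasing elements not in $S$. A covered map is $(M,S)$ with $S$ stable by $\alpha$ and $(S,\sigma_{|S},\alpha_{|S})$ a connecting unicellular map ($\sigma_{|S},\alpha_{|S}$ transitive on $S$, $S$ meets every cycle of $\sigma$ — $S=\emptyset$ allowed if $\sigma$ has one cycle — and $\sigma_{|S}\alpha_{|S}$ cyclic); its dual is $(M^*,\bar S)$, which is again a covered map. For a covered map $(M,S)$ the motion function $\theta(h)=\sigma\alpha(h)$ ($h\in S$), $\theta(h)=\sigma(h)$ ($h\notin S$) is cyclic, and the appearance order is $r\prec_S\theta(r)\prec_S\cdots\prec_S\theta^{|H|-1}(r)$. $\Delta(M,S)=(M,(I,O))$ with $I=\{h\in S:\alpha(h)\prec_S h\}\cup\{h\notin S:h\prec_S\alpha(h)\}$, $O=H\setminus I$ (computed for $(M^*,\bar S)$ with the motion function and appearance order of $(M^*,\bar S)$). *)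

theory Defs
  imports "HOL-Combinatorics.Permutations"
begin

text \<open>Permutations are functions on 'a that permute a finite set H (identity outside H).
  Composition is right to left: (f \<circ> g) h = f (g h).\<close>

text \<open>Restriction of a permutation to a subset S: erase elements outside S from the cycles,
  i.e. send h in S to the first element of S after h on its cycle.\<close>
definition restr :: "('a \<Rightarrow> 'a) \<Rightarrow> 'a set \<Rightarrow> 'a \<Rightarrow> 'a" where
  "restr \<pi> S h = (if h \<in> S then (\<pi> ^^ (LEAST k. 0 < k \<and> (\<pi> ^^ k) h \<in> S)) h else h)"

definition cyclic_on :: "('a \<Rightarrow> 'a) \<Rightarrow> 'a set \<Rightarrow> bool" where
  "cyclic_on \<pi> A \<longleftrightarrow> (\<forall>x\<in>A. \<forall>y\<in>A. \<exists>k. (\<pi> ^^ k) x = y)"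

text \<open>The group generated by \<sigma> and \<alpha> acts transitively on A
  (for permutations of a finite set, reachability by forward steps suffices).\<close>
definition transitive_on :: "('a \<Rightarrow> 'a) \<Rightarrow> ('a \<Rightarrow> 'a) \<Rightarrow> 'a set \<Rightarrow> bool" where
  "transitive_on \<sigma> \<alpha> A \<longleftrightarrow>
     (\<forall>x\<in>A. \<forall>y\<in>A. (x, y) \<in> ({(h, \<sigma> h) | h. h \<in> A} \<union> {(h, \<alpha> h) | h. h \<in> A})\<^sup>*)"

definition is_map :: "'a set \<Rightarrow> ('a \<Rightarrow> 'a) \<Rightarrow> ('a \<Rightarrow> 'a) \<Rightarrow> 'a \<Rightarrow> bool" where
  "is_map H \<sigma> \<alpha> r \<longleftrightarrow>
     finite H \<and> \<sigma> permutes H \<and> \<alpha> permutes H \<and>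
     (\<forall>h\<in>H. \<alpha> (\<alpha> h) = h \<and> \<alpha> h \<noteq> h) \<and>
     transitive_on \<sigma> \<alpha> H \<and> r \<in> H"

definition connecting_unicellular :: "'a set \<Rightarrow> ('a \<Rightarrow> 'a) \<Rightarrow> ('a \<Rightarrow> 'a) \<Rightarrow> 'a set \<Rightarrow> bool" where
  "connecting_unicellular H \<sigma> \<alpha> S \<longleftrightarrow>
     transitive_on (restr \<sigma> S) (restr \<alpha> S) S \<and>
     (if S = {} then cyclic_on \<sigma> H else (\<forall>h\<in>H. \<exists>k. (\<sigma> ^^ k) h \<in> S)) \<and>
     cyclic_on (restr \<sigma> S \<circ> restr \<alpha> S) S"

definition covered_map :: "'a set \<Rightarrow> ('a \<Rightarrow> 'a) \<Rightarrow> ('a \<Rightarrow> 'a) \<Rightarrow> 'a \<Rightarrow> 'a set \<Rightarrow> bool" where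
  "covered_map H \<sigma> \<alpha> r S \<longleftrightarrow>
     is_map H \<sigma> \<alpha> r \<and> S \<subseteq> H \<and> \<alpha> ` S \<subseteq> S \<and> connecting_unicellular H \<sigma> \<alpha> S"

definition motion :: "('a \<Rightarrow> 'a) \<Rightarrow> ('a \<Rightarrow> 'a) \<Rightarrow> 'a set \<Rightarrow> 'a \<Rightarrow> 'a" where
  "motion \<sigma> \<alpha> S h = (if h \<in> S then \<sigma> (\<alpha> h) else \<sigma> h)"

definition appear_pos :: "('a \<Rightarrow> 'a) \<Rightarrow> ('a \<Rightarrow> 'a) \<Rightarrow> 'a \<Rightarrow> 'a set \<Rightarrow> 'a \<Rightarrow> nat" where
  "appear_pos \<sigma> \<alpha> r S h = (LEAST k. (motion \<sigma> \<alpha> S ^^ k) r = h)"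

definition appear_less :: "('a \<Rightarrow> 'a) \<Rightarrow> ('a \<Rightarrow> 'a) \<Rightarrow> 'a \<Rightarrow> 'a set \<Rightarrow> 'a \<Rightarrow> 'a \<Rightarrow> bool" where
  "appear_less \<sigma> \<alpha> r S h h' \<longleftrightarrow> appear_pos \<sigma> \<alpha> r S h < appear_pos \<sigma> \<alpha> r S h'"

definition Delta :: "'a set \<Rightarrow> ('a \<Rightarrow> 'a) \<Rightarrow> ('a \<Rightarrow> 'a) \<Rightarrow> 'a \<Rightarrow> 'a set \<Rightarrow> 'a set \<times> 'a set" where
  "Delta H \<sigma> \<alpha> r S =
     (let I = {h \<in> S. appear_less \<sigma> \<alpha> r S (\<alpha> h) h} \<union>
              {h \<in> H - S. appear_less \<sigma> \<alpha> r S h (\<alpha> h)}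
      in (I, H - I))"

end

theory Submission
  imports Defs
begin

lemma walk:
  assumes "\<forall>j<k. (\<sigma> ^^ j) y \<notin> S"
  shows "(motion \<sigma> \<alpha> S ^^ k) y = (\<sigma> ^^ k) y"
  using assms
proof (induction k)
  case 0 then show ?case by simp
next
  case (Suc k)
  have "\<forall>j<k. (\<sigma> ^^ j) y \<notin> S" using Suc.prems by simp
  then have ih: "(motion \<sigma> \<alpha> S ^^ k) y = (\<sigma> ^^ k) y" by (rule Suc.IH)
  have "(\<sigma> ^^ k) y \<notin> S" using Suc.prems by simp
  have "(motion \<sigma> \<alpha> S ^^ Suc k) y = motion \<sigma> \<alpha> S ((motion \<sigma> \<alpha> S ^^ k) y)" by simp
  also have "\<dots> = motion \<sigma> \<alpha> S ((\<sigma> ^^ k) y)" by (simp only: ih)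
  also have "\<dots> = \<sigma> ((\<sigma> ^^ k) y)" using \<open>(\<sigma> ^^ k) y \<notin> S\<close> by (simp add: motion_def)
  finally show ?case by simp
qed

definition reach :: "('a \<Rightarrow> 'a) \<Rightarrow> 'a \<Rightarrow> 'a \<Rightarrow> bool" where "reach f x y \<longleftrightarrow> (\<exists>n. (f ^^ n) x = y)"

lemma reach_refl: "reach f x x"
  unfolding reach_def by (rule exI[of _ 0]) simp

lemma reach_trans: "reach f x y \<Longrightarrow> reach f y z \<Longrightarrow> reach f x z"
proof -
  assume "reach f x y" "reach f y z"
  then obtain n m where n: "(f ^^ n) x = y" and m: "(f ^^ m) y = z" unfolding reach_def by blast
  have "(f ^^ (m + n)) x = (f ^^ m) ((f ^^ n) x)" by (simp add: funpow_add)
  then have "(f ^^ (m + n)) x = z" using n m by simp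
  then show "reach f x z" unfolding reach_def by blast
qed

lemma motion_reach_all:
  assumes cm: "covered_map H \<sigma> \<alpha> r S" and h: "h \<in> H"
  shows "reach (motion \<sigma> \<alpha> S) r h"
proof -
  let ?t = "motion \<sigma> \<alpha> S"
  have fin: "finite H" and sp: "\<sigma> permutes H" and ap: "\<alpha> permutes H"
    and inv: "\<forall>h\<in>H. \<alpha> (\<alpha> h) = h \<and> \<alpha> h \<noteq> h" and rH: "r \<in> H"
    and SH: "S \<subseteq> H" and aS: "\<alpha> ` S \<subseteq> S"
    and cov: "if S = {} then cyclic_on \<sigma> H else (\<forall>h\<in>H. \<exists>k. (\<sigma> ^^ k) h \<in> S)"
    and cyc: "cyclic_on (restr \<sigma> S \<circ> restr \<alpha> S) S"
  proof -
    have im: "is_map H \<sigma> \<alpha> r" and cu: "connecting_unicellular H \<sigma> \<alpha> S"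
      using cm unfolding covered_map_def by simp_all
    show "finite H" "\<sigma> permutes H" "\<alpha> permutes H" "\<forall>h\<in>H. \<alpha> (\<alpha> h) = h \<and> \<alpha> h \<noteq> h" "r \<in> H"
      using im unfolding is_map_def by simp_all
    show "S \<subseteq> H" "\<alpha> ` S \<subseteq> S" using cm unfolding covered_map_def by simp_all
    show "if S = {} then cyclic_on \<sigma> H else (\<forall>h\<in>H. \<exists>k. (\<sigma> ^^ k) h \<in> S)"
      using cu unfolding connecting_unicellular_def by (rule conjunct1[OF conjunct2])
    show "cyclic_on (restr \<sigma> S \<circ> restr \<alpha> S) S"
      using cu unfolding connecting_unicellular_def by (rule conjunct2[OF conjunct2])
  qed
  have perm: "permutation \<sigma>" using fin sp permutation_permutes by blast
  show ?thesis
  proof (cases "S = {}")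
    case True
    then have "cyclic_on \<sigma> H" using cov by simp
    then obtain k where "(\<sigma> ^^ k) r = h" using rH h unfolding cyclic_on_def by blast
    moreover have "(?t ^^ k) r = (\<sigma> ^^ k) r" by (rule walk) (simp add: True)
    ultimately show ?thesis unfolding reach_def by blast
  next
    case False
    then have cov2: "\<forall>h\<in>H. \<exists>k. (\<sigma> ^^ k) h \<in> S" using cov by simp
    have toS: "\<exists>s\<in>S. reach ?t x s" if xH: "x \<in> H" for x
    proof (cases "x \<in> S")
      case True show ?thesis by (rule bexI[where x=x]) (rule reach_refl, rule True)
    next
      case False
      obtain k where kx: "(\<sigma> ^^ k) x \<in> S" using bspec[OF cov2 xH] by (elim exE)
      define k0 where "k0 = (LEAST k. (\<sigma> ^^ k) x \<in> S)"
      have k0S: "(\<sigma> ^^ k0) x \<in> S" unfolding k0_def by (rule LeastI[of "\<lambda>k. (\<sigma> ^^ k) x \<in> S", OF kx])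
      have "\<forall>j<k0. (\<sigma> ^^ j) x \<notin> S"
      proof (intro allI impI)
        fix j assume "j < k0"
        then show "(\<sigma> ^^ j) x \<notin> S" unfolding k0_def by (rule not_less_Least[of j "\<lambda>k. (\<sigma> ^^ k) x \<in> S"])
      qed
      then have "(?t ^^ k0) x = (\<sigma> ^^ k0) x" by (rule walk)
      then show ?thesis using k0S unfolding reach_def by blast
    qed
    have rstep: "restr \<alpha> S x = \<alpha> x" if "x \<in> S" for x
    proof -
      have "(LEAST k. 0 < k \<and> (\<alpha> ^^ k) x \<in> S) = 1"
        by (rule Least_equality) (use that aS in auto)
      then show ?thesis using that by (simp add: restr_def)
    qed
    have gstep: "(restr \<sigma> S \<circ> restr \<alpha> S) x \<in> S \<and> reach ?t x ((restr \<sigma> S \<circ> restr \<alpha> S) x)"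
      if xS: "x \<in> S" for x
    proof -
      have axS: "\<alpha> x \<in> S" using aS xS by auto
      obtain p where p: "p > 0" "(\<sigma> ^^ p) (\<alpha> x) = \<alpha> x" using permutation_self[OF perm] by metis
      define K where "K = (LEAST k. 0 < k \<and> (\<sigma> ^^ k) (\<alpha> x) \<in> S)"
      have KP: "0 < K \<and> (\<sigma> ^^ K) (\<alpha> x) \<in> S" unfolding K_def
        by (rule LeastI[where k=p]) (use p axS in \<open>simp add: permutes_in_funpow_image\<close>)
      have Kmin: "(\<sigma> ^^ j) (\<alpha> x) \<notin> S" if "0 < j" "j < K" for j
      proof -
        have "\<not> (0 < j \<and> (\<sigma> ^^ j) (\<alpha> x) \<in> S)"
          using \<open>j < K\<close> unfolding K_def by (rule not_less_Least)
        then show ?thesis using \<open>0 < j\<close> by blast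
      qed
      have g: "(restr \<sigma> S \<circ> restr \<alpha> S) x = (\<sigma> ^^ K) (\<alpha> x)"
      proof -
        have "(restr \<sigma> S \<circ> restr \<alpha> S) x = restr \<sigma> S (\<alpha> x)" using rstep[OF xS] by simp
        also have "\<dots> = (\<sigma> ^^ K) (\<alpha> x)" using axS unfolding restr_def K_def by simp
        finally show ?thesis .
      qed
      have "\<forall>j<K - 1. (\<sigma> ^^ j) (\<sigma> (\<alpha> x)) \<notin> S"
      proof (intro allI impI)
        fix j assume "j < K - 1"
        then have "Suc j < K" by simp
        then have "(\<sigma> ^^ Suc j) (\<alpha> x) \<notin> S" by (intro Kmin) simp_all
        then show "(\<sigma> ^^ j) (\<sigma> (\<alpha> x)) \<notin> S" by (simp only: funpow_Suc_right o_apply not_False_eq_True)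
      qed
      then have w: "(?t ^^ (K - 1)) (\<sigma> (\<alpha> x)) = (\<sigma> ^^ (K - 1)) (\<sigma> (\<alpha> x))" by (rule walk)
      obtain K' where K': "K = Suc K'" using KP by (cases K) auto
      have "(?t ^^ K) x = (?t ^^ (K - 1)) (?t x)"
        unfolding K' by (simp only: funpow_Suc_right o_apply diff_Suc_1)
      also have "?t x = \<sigma> (\<alpha> x)" using xS by (simp add: motion_def)
      also note w
      also have "(\<sigma> ^^ (K - 1)) (\<sigma> (\<alpha> x)) = (\<sigma> ^^ K) (\<alpha> x)"
        unfolding K' by (simp only: funpow_Suc_right o_apply diff_Suc_1)
      finally have tK: "(?t ^^ K) x = (restr \<sigma> S \<circ> restr \<alpha> S) x" using g by simp
      have "(restr \<sigma> S \<circ> restr \<alpha> S) x \<in> S" using g KP by simp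
      moreover have "reach ?t x ((restr \<sigma> S \<circ> restr \<alpha> S) x)" unfolding reach_def using tK by blast
      ultimately show ?thesis by blast
    qed
    have Sreach: "reach ?t x y" if sx: "x \<in> S" and sy: "y \<in> S" for x y
    proof -
      obtain k where k: "((restr \<sigma> S \<circ> restr \<alpha> S) ^^ k) x = y"
        using cyc sx sy unfolding cyclic_on_def by blast
      have "((restr \<sigma> S \<circ> restr \<alpha> S) ^^ k) x \<in> S \<and> reach ?t x (((restr \<sigma> S \<circ> restr \<alpha> S) ^^ k) x)" for k
      proof (induction k)
        case 0
        show ?case using sx reach_refl by simp
      next
        case (Suc k)
        let ?y = "((restr \<sigma> S \<circ> restr \<alpha> S) ^^ k) x"
        have y: "?y \<in> S \<and> reach ?t x ?y" by (rule Suc.IH)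
        have gy: "(restr \<sigma> S \<circ> restr \<alpha> S) ?y \<in> S \<and> reach ?t ?y ((restr \<sigma> S \<circ> restr \<alpha> S) ?y)"
          using y by (intro gstep) (rule conjunct1)
        have eq: "((restr \<sigma> S \<circ> restr \<alpha> S) ^^ Suc k) x = (restr \<sigma> S \<circ> restr \<alpha> S) ?y"
          by (simp only: funpow.simps(2) o_apply)
        show ?case unfolding eq using gy y reach_trans[of ?t x ?y] by blast
      qed
      then show ?thesis using k by blast
    qed
    have fromS: "\<exists>u\<in>S. reach ?t u h"
    proof (cases "h \<in> S")
      case True show ?thesis by (rule bexI[where x=h]) (rule reach_refl, rule True)
    next
      case hS: False
      obtain k where kS: "(\<sigma> ^^ k) h \<in> S" using bspec[OF cov2 h] by (elim exE)
      obtain p where p: "p > 0" "(\<sigma> ^^ p) h = h" using permutation_self[OF perm] by metis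
      define N where "N = p * (k + 1)"
      have "(\<sigma> ^^ (p * n)) h = h" for n
      proof (induction n)
        case (Suc n)
        have "(\<sigma> ^^ (p * Suc n)) h = (\<sigma> ^^ (p * n)) ((\<sigma> ^^ p) h)"
        proof -
          have "p * Suc n = p * n + p" by simp
          then show ?thesis by (simp only: funpow_add o_apply)
        qed
        then show ?case using Suc p(2) by simp
      qed simp
      then have hN: "(\<sigma> ^^ N) h = h" unfolding N_def by blast
      have "1 * (k + 1) \<le> p * (k + 1)" using p(1) by (intro mult_right_mono) simp_all
      then have "k + 1 \<le> p * (k + 1)" by simp
      then have kN: "k < N" unfolding N_def by linarith
      define A where "A = {j. j < N \<and> (\<sigma> ^^ j) h \<in> S}"
      have Afin: "finite A" by (rule finite_subset[of _ "{..<N}"]) (auto simp: A_def)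
      have kA: "k \<in> A" using kN kS unfolding A_def by auto
      define j0 where "j0 = Max A"
      have j0A: "j0 \<in> A" unfolding j0_def using Afin kA Max_in by blast
      have j0max: "\<And>j. j \<in> A \<Longrightarrow> j \<le> j0" unfolding j0_def using Afin by simp
      define t where "t = (\<sigma> ^^ j0) h"
      define m where "m = N - j0"
      have tS: "t \<in> S" using j0A unfolding A_def t_def by auto
      have m0: "m > 0" using j0A unfolding A_def m_def by auto
      have mj: "m + j0 = N" using j0A unfolding A_def m_def by auto
      have "(\<sigma> ^^ m) t = (\<sigma> ^^ (m + j0)) h" unfolding t_def by (simp add: funpow_add)
      then have tm: "(\<sigma> ^^ m) t = h" using mj hN by simp
      have nS: "(\<sigma> ^^ i) t \<notin> S" if "0 < i" "i < m" for i
      proof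
        assume "(\<sigma> ^^ i) t \<in> S"
        then have "(\<sigma> ^^ (i + j0)) h \<in> S" unfolding t_def by (simp add: funpow_add)
        moreover have "i + j0 < N" using that unfolding m_def by auto
        ultimately have "i + j0 \<in> A" unfolding A_def by auto
        then show False using j0max that by fastforce
      qed
      define u where "u = \<alpha> t"
      have uS: "u \<in> S" using aS tS unfolding u_def by auto
      have "t \<in> H" using tS SH by blast
      then have "\<alpha> (\<alpha> t) = t" using inv by blast
      then have tu: "?t u = \<sigma> t" using uS unfolding u_def motion_def by simp
      have "\<forall>j<m - 1. (\<sigma> ^^ j) (\<sigma> t) \<notin> S"
      proof (intro allI impI)
        fix j assume "j < m - 1"
        then have "Suc j < m" by simp
        then have "(\<sigma> ^^ Suc j) t \<notin> S" by (intro nS) simp_all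
        then show "(\<sigma> ^^ j) (\<sigma> t) \<notin> S" by (simp only: funpow_Suc_right o_apply not_False_eq_True)
      qed
      then have w: "(?t ^^ (m - 1)) (\<sigma> t) = (\<sigma> ^^ (m - 1)) (\<sigma> t)" by (rule walk)
      obtain m' where m': "m = Suc m'" using m0 by (cases m) auto
      have "(?t ^^ m) u = (?t ^^ (m - 1)) (?t u)"
        unfolding m' by (simp only: funpow_Suc_right o_apply diff_Suc_1)
      also note tu
      also note w
      also have "(\<sigma> ^^ (m - 1)) (\<sigma> t) = (\<sigma> ^^ m) t"
        unfolding m' by (simp only: funpow_Suc_right o_apply diff_Suc_1)
      finally have "(?t ^^ m) u = h" using tm by simp
      then show ?thesis using uS unfolding reach_def by blast
    qed
    obtain s where s: "s \<in> S" "reach ?t r s" using toS[OF rH] by (elim bexE)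
    obtain u where u: "u \<in> S" "reach ?t u h" using fromS by (elim bexE)
    have su: "reach ?t s u" by (rule Sreach[OF s(1) u(1)])
    show ?thesis by (rule reach_trans[OF reach_trans[OF s(2) su] u(2)])
  qed
qed

theorem mainTheorem12:
  fixes H :: "'a set" and \<sigma> \<alpha> :: "'a \<Rightarrow> 'a" and r :: 'a and S Iset Oset :: "'a set"
  assumes "covered_map H \<sigma> \<alpha> r S"
    and "Delta H \<sigma> \<alpha> r S = (Iset, Oset)"
  shows "Delta H (\<sigma> \<circ> \<alpha>) \<alpha> r (H - S) = (Oset, Iset)"
proof -
  have sp: "\<sigma> permutes H" and ap: "\<alpha> permutes H"
    and inv: "\<forall>h\<in>H. \<alpha> (\<alpha> h) = h \<and> \<alpha> h \<noteq> h" and SH: "S \<subseteq> H"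
    using assms(1) unfolding covered_map_def is_map_def by auto
  have mot: "motion (\<sigma> \<circ> \<alpha>) \<alpha> (H - S) = motion \<sigma> \<alpha> S"
  proof
    fix h show "motion (\<sigma> \<circ> \<alpha>) \<alpha> (H - S) h = motion \<sigma> \<alpha> S h"
    proof (cases "h \<in> H")
      case True
      then have "\<alpha> (\<alpha> h) = h" using inv by blast
      then show ?thesis using True SH unfolding motion_def by auto
    next
      case False
      then have "\<sigma> h = h" "\<alpha> h = h" using permutes_not_in[OF sp] permutes_not_in[OF ap] by auto
      then show ?thesis using False SH unfolding motion_def by auto
    qed
  qed
  have al: "appear_less (\<sigma> \<circ> \<alpha>) \<alpha> r (H - S) = appear_less \<sigma> \<alpha> r S"
    unfolding appear_less_def appear_pos_def mot ..
  let ?p = "appear_pos \<sigma> \<alpha> r S"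
  have pos: "(motion \<sigma> \<alpha> S ^^ ?p h) r = h" if hH: "h \<in> H" for h
  proof -
    obtain n where "(motion \<sigma> \<alpha> S ^^ n) r = h"
      using motion_reach_all[OF assms(1) hH] unfolding reach_def by blast
    then show ?thesis unfolding appear_pos_def by (rule LeastI)
  qed
  have neq: "?p (\<alpha> h) \<noteq> ?p h" if "h \<in> H" for h
  proof
    assume e: "?p (\<alpha> h) = ?p h"
    have "\<alpha> h \<in> H" using permutes_in_image[OF ap, of h] that by simp
    then have "(motion \<sigma> \<alpha> S ^^ ?p (\<alpha> h)) r = \<alpha> h" by (rule pos)
    then have "\<alpha> h = (motion \<sigma> \<alpha> S ^^ ?p (\<alpha> h)) r" by (rule sym)
    also have "\<dots> = (motion \<sigma> \<alpha> S ^^ ?p h) r" by (simp only: e)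
    also have "\<dots> = h" using pos[OF that] .
    finally have "\<alpha> h = h" .
    moreover have "\<alpha> h \<noteq> h" using inv that by blast
    ultimately show False by contradiction
  qed
  have IO: "Iset = {h \<in> S. appear_less \<sigma> \<alpha> r S (\<alpha> h) h} \<union> {h \<in> H - S. appear_less \<sigma> \<alpha> r S h (\<alpha> h)}"
    "Oset = H - Iset"
    using assms(2) unfolding Delta_def Let_def by auto
  have HS: "H - (H - S) = S" using SH by auto
  have I': "{h \<in> H - S. appear_less \<sigma> \<alpha> r S (\<alpha> h) h} \<union> {h \<in> H - (H - S). appear_less \<sigma> \<alpha> r S h (\<alpha> h)} = Oset"
  proof (rule set_eqI)
    fix h
    show "h \<in> {h \<in> H - S. appear_less \<sigma> \<alpha> r S (\<alpha> h) h} \<union> {h \<in> H - (H - S). appear_less \<sigma> \<alpha> r S h (\<alpha> h)} \<longleftrightarrow> h \<in> Oset"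
    proof (cases "h \<in> H")
      case True
      then have "?p (\<alpha> h) \<noteq> ?p h" by (rule neq)
      then show ?thesis unfolding HS IO(2) IO(1) appear_less_def using SH True by auto
    next
      case False
      then show ?thesis unfolding HS IO(2) using SH by auto
    qed
  qed
  have "H - Oset = Iset" using IO SH by auto
  then show ?thesis unfolding Delta_def Let_def al I' by simp
qed

end
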